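(* Let $R\subseteq T$ be an extension of rings. Suppose $V$ is a maximal subring of $T$ and $x\in U(R)\setminus V$ satisfies $xV=Vx$ (in particular this holds if $V$ is a duo ring). If $x^{-1}\in V$ (in particular, if $V$ is left integrally closed in $T$), then $R$ has a maximal subring.
   Context: All rings are associative with identity $1\neq0$; subrings contain the identity. A maximal subring of $T$ is a proper subring with no subring strictly between it and $T$. $U(R)$ is the unit group of $R$. A ring is duo if every one-sided ideal is two-sided. $t\in T$ is left integral over $V$ if $t^n+v_{n-1}t^{n-1}+\cdots+v_1t+v_0=0$ for some $n\geq1$ and $v_i\in V$ (coefficients on the left); $V$ is left integrally closed in $T$ if every element of $T$ left integral over $V$ lies in $V$. *)

theory Defs
  imports Main
begin

definition is_subring :: "'a::ring_1 set \<Rightarrow> bool" where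
  "is_subring S \<longleftrightarrow> 1 \<in> S \<and> (\<forall>a\<in>S. \<forall>b\<in>S. a - b \<in> S \<and> a * b \<in> S)"

definition maximal_subring :: "'a::ring_1 set \<Rightarrow> 'a set \<Rightarrow> bool" where
  "maximal_subring M A \<longleftrightarrow> is_subring M \<and> M \<subseteq> A \<and> M \<noteq> A \<and>
     (\<forall>W. is_subring W \<and> M \<subseteq> W \<and> W \<subseteq> A \<longrightarrow> W = M \<or> W = A)"

definition ring_units :: "'a::ring_1 set \<Rightarrow> 'a set" where
  "ring_units R = {x \<in> R. \<exists>y\<in>R. x * y = 1 \<and> y * x = 1}"

end

theory Submission
  imports Defs
begin

lemma comm_pow:
  fixes V :: "'a::ring_1 set" and x :: 'a
  assumes "(\<lambda>v. x * v) ` V = (\<lambda>v. v * x) ` V" and "w \<in> V"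
  shows "\<exists>w'\<in>V. x ^ n * w = w' * x ^ n"
  using assms(2)
proof (induction n arbitrary: w)
  case 0 then show ?case by auto
next
  case (Suc n)
  then obtain w1 where w1: "w1 \<in> V" "x ^ n * w = w1 * x ^ n" by blast
  have "x * w1 \<in> (\<lambda>v. v * x) ` V" using w1(1) assms(1) by blast
  then obtain w2 where w2: "w2 \<in> V" "x * w1 = w2 * x" by blast
  have "x ^ Suc n * w = x * (x ^ n * w)" by (simp add: mult.assoc)
  also have "\<dots> = (x * w1) * x ^ n" using w1 by (simp add: mult.assoc)
  also have "\<dots> = w2 * x ^ Suc n" using w2 by (simp add: mult.assoc power_commutes)
  finally show ?case using w2 by blast
qed

lemma ypow:
  fixes x y :: "'a::ring_1"
  assumes "y * x = 1" "n \<le> m"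
  shows "y ^ (m - n) * x ^ m = x ^ n"
proof -
  obtain k where m: "m = k + n" using assms(2) le_Suc_ex by (metis add.commute)
  have "y ^ k * x ^ k = 1"
    by (induction k) (simp_all add: mult.assoc power_commutes,
        metis assms(1) mult.assoc mult_1_right power_commutes)
  then have "y ^ k * (x ^ k * x ^ n) = x ^ n" by (metis mult.assoc mult_1_left)
  then show ?thesis using m by (simp add: power_add mult.assoc)
qed

theorem proposition3p3:
  fixes R V :: "'a::ring_1 set" and x y :: 'a
  assumes "is_subring R"
    and "maximal_subring V (UNIV :: 'a set)"
    and "x \<in> ring_units R" and "x \<notin> V"
    and "(\<lambda>v. x * v) ` V = (\<lambda>v. v * x) ` V"
    and "x * y = 1" and "y * x = 1"
    and "y \<in> V"
  shows "\<exists>M. maximal_subring M R"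
proof -
  have subV: "is_subring V" using assms(2) unfolding maximal_subring_def by blast
  have VM: "\<And>W. is_subring W \<Longrightarrow> V \<subseteq> W \<Longrightarrow> W = V \<or> W = UNIV"
    using assms(2) unfolding maximal_subring_def by blast
  have xR: "x \<in> R" using assms(3) unfolding ring_units_def by blast
  have yR: "y \<in> R"
  proof -
    obtain z where z: "z \<in> R" "x * z = 1" "z * x = 1" using assms(3) unfolding ring_units_def by blast
    have "y = y * (x * z)" using z by simp
    also have "\<dots> = z" using assms(7) by (simp add: mult.assoc[symmetric])
    finally show ?thesis using z by simp
  qed
  have powV: "\<And>n. y ^ n \<in> V" proof -
    fix n show "y ^ n \<in> V" by (induction n) (use subV assms(8) in \<open>auto simp: is_subring_def\<close>)
  qed
  have powR: "\<And>n. y ^ n \<in> R" proof -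
    fix n show "y ^ n \<in> R" by (induction n) (use assms(1) yR in \<open>auto simp: is_subring_def\<close>)
  qed
  define S where "S = {v * x ^ n | v n. v \<in> V}"
  have "is_subring S"
    unfolding is_subring_def
  proof (intro conjI ballI)
    have "(1::'a) = 1 * x ^ 0" by simp
    then show "1 \<in> S" unfolding S_def using subV unfolding is_subring_def by blast
  next
    fix a b assume "a \<in> S" "b \<in> S"
    then obtain v n w m where a: "a = v * x ^ n" "v \<in> V" and b: "b = w * x ^ m" "w \<in> V"
      unfolding S_def by blast
    show "a * b \<in> S"
    proof -
      obtain w' where w': "w' \<in> V" "x ^ n * w = w' * x ^ n" using comm_pow[OF assms(5) b(2)] by blast
      have "a * b = v * (x ^ n * w) * x ^ m" using a b by (simp add: mult.assoc)
      also have "\<dots> = (v * w') * x ^ (n + m)" using w'(2) by (simp add: mult.assoc power_add)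
      finally have "a * b = (v * w') * x ^ (n + m)" .
      moreover have "v * w' \<in> V" using subV a(2) w'(1) by (simp add: is_subring_def)
      ultimately show ?thesis unfolding S_def by blast
    qed
    show "a - b \<in> S"
    proof (cases "n \<le> m")
      case True
      have "a = (v * y ^ (m - n)) * x ^ m" using a ypow[OF assms(7) True] by (simp add: mult.assoc)
      then have "a - b = (v * y ^ (m - n) - w) * x ^ m" using b by (simp add: algebra_simps)
      moreover have "v * y ^ (m - n) - w \<in> V" using subV a(2) b(2) powV by (simp add: is_subring_def)
      ultimately show ?thesis unfolding S_def by blast
    next
      case False
      then have F: "m \<le> n" by simp
      have "b = (w * y ^ (n - m)) * x ^ n" using b ypow[OF assms(7) F] by (simp add: mult.assoc)
      then have "a - b = (v - w * y ^ (n - m)) * x ^ n" using a by (simp add: algebra_simps)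
      moreover have "v - w * y ^ (n - m) \<in> V" using subV a(2) b(2) powV by (simp add: is_subring_def)
      ultimately show ?thesis unfolding S_def by blast
    qed
  qed
  moreover have "V \<subseteq> S" unfolding S_def by (force intro: exI[of _ 0])
  moreover have "x \<in> S" unfolding S_def using subV by (force simp: is_subring_def intro!: exI[of _ 1] exI[of _ 1])
  ultimately have SU: "S = UNIV" using VM assms(4) by blast
  have decomp: "\<And>r. r \<in> R \<Longrightarrow> \<exists>v n. v \<in> R \<inter> V \<and> r = v * x ^ n"
  proof -
    fix r assume r: "r \<in> R"
    have "r \<in> S" using SU by simp
    then obtain v n where v: "r = v * x ^ n" "v \<in> V" unfolding S_def by blast
    have "v = r * y ^ n" using v ypow[OF assms(6), of 0 n] ypow[OF assms(7)]
      by (simp add: mult.assoc)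
    then have "v \<in> R" using r powR assms(1) by (simp add: is_subring_def)
    then show "\<exists>v n. v \<in> R \<inter> V \<and> r = v * x ^ n" using v by blast
  qed
  define F where "F = {W. is_subring W \<and> R \<inter> V \<subseteq> W \<and> W \<subseteq> R \<and> x \<notin> W}"
  have "R \<inter> V \<in> F" unfolding F_def using assms(1) subV assms(4) by (auto simp: is_subring_def)
  then have Fne: "F \<noteq> {}" by blast
  have "\<exists>M\<in>F. \<forall>X\<in>F. M \<subseteq> X \<longrightarrow> X = M"
  proof (rule subset_Zorn_nonempty[OF Fne])
    fix C assume C: "C \<noteq> {}" "subset.chain F C"
    have CF: "C \<subseteq> F" and ch: "\<And>A B. A \<in> C \<Longrightarrow> B \<in> C \<Longrightarrow> A \<subseteq> B \<or> B \<subseteq> A"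
      using C(2) unfolding subset.chain_def by auto
    have "is_subring (\<Union>C)" unfolding is_subring_def
    proof (intro conjI ballI)
      show "1 \<in> \<Union>C" using C CF unfolding F_def is_subring_def by blast
    next
      fix a b assume "a \<in> \<Union>C" "b \<in> \<Union>C"
      then obtain A B where AB: "A \<in> C" "B \<in> C" "a \<in> A" "b \<in> B" by blast
      then have "A \<subseteq> B \<or> B \<subseteq> A" using ch by blast
      then obtain D where D: "D \<in> C" "a \<in> D" "b \<in> D" using AB by blast
      then have "is_subring D" using CF unfolding F_def by blast
      then show "a - b \<in> \<Union>C" "a * b \<in> \<Union>C" using D unfolding is_subring_def by blast+
    qed
    then show "\<Union>C \<in> F" using C CF unfolding F_def by blast
  qed
  then obtain M where M: "M \<in> F" "\<And>X. X \<in> F \<Longrightarrow> M \<subseteq> X \<Longrightarrow> X = M" by blast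
  have "maximal_subring M R"
    unfolding maximal_subring_def
  proof (intro conjI allI impI)
    show "is_subring M" "M \<subseteq> R" using M(1) unfolding F_def by blast+
    show "M \<noteq> R" using M(1) xR unfolding F_def by blast
  next
    fix W assume W: "is_subring W \<and> M \<subseteq> W \<and> W \<subseteq> R"
    show "W = M \<or> W = R"
    proof (cases "x \<in> W")
      case False
      then have "W \<in> F" using W M(1) unfolding F_def by blast
      then show ?thesis using M(2) W by blast
    next
      case True
      have xp: "\<And>n. x ^ n \<in> W"
      proof -
        fix n show "x ^ n \<in> W" by (induction n) (use W True in \<open>auto simp: is_subring_def\<close>)
      qed
      have "R \<subseteq> W"
      proof
        fix r assume "r \<in> R"
        then obtain v n where "v \<in> R \<inter> V" "r = v * x ^ n" using decomp by blast
        moreover have "v \<in> W" using calculation(1) W M(1) unfolding F_def by blast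
        ultimately show "r \<in> W" using xp W unfolding is_subring_def by blast
      qed
      then show ?thesis using W by blast
    qed
  qed
  then show ?thesis by blast
qed

end
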